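(* Let $A$ be a selfadjoint operator on a separable infinite-dimensional Hilbert space $\mathcal{H}$, and let $\mathcal{L}$ be either an $A$-regular Galerkin sequence or, if $A\ge0$, an $A^{1/2}$-regular Galerkin sequence. Let $\lambda\in\mathbb{R}$, $n_k\to\infty$, and $x_k\in\mathcal{L}_{n_k}$ with $\|x_k\|=1$, $x_k\rightharpoonup x$ weakly in $\mathcal{H}$ and $\pi_{n_k}(A-\lambda)x_k\to0$. Then $x\in\operatorname{Ker}(A-\lambda)$.
   Context: A sequence $\mathcal{L}=(\mathcal{L}_n)$ of finite-dimensional subspaces $\mathcal{L}_n\subset\operatorname{D}(A)$ is $A$-regular if for every $f\in\operatorname{D}(A)$ there exist $f_n\in\mathcal{L}_n$ with $\|f_n-f\|+\|Af_n-Af\|\to0$; then $A_n=\pi_nA|_{\mathcal{L}_n}$, $\pi_n$ the orthogonal projection onto $\mathcal{L}_n$. If $A\ge0$, finite-dimensional $\mathcal{L}_n\subset\operatorname{D}(A^{1/2})$ form an $A^{1/2}$-regular sequence if every $f\in\operatorname{D}(A^{1/2})$ is the limit of some $f_n\in\mathcal{L}_n$ in the norm $\|\cdot\|+\|A^{1/2}\cdot\|$; then $A_n:\mathcal{L}_n\to\mathcal{L}_n$ is defined by $\langle y,A_nx\rangle=\langle A^{1/2}y,A^{1/2}x\rangle$. In both cases $\pi_n(A-\lambda)x:=A_nx-\lambda x$ for $x\in\mathcal{L}_n$. *)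

theory Defs
  imports "HOL-Analysis.Analysis"
begin

text \<open>
  A complex Hilbert space is modelled as a real Hilbert space
  (type class real_inner + complete_space) equipped with a complex structure J
  (multiplication by the imaginary unit).  The complex inner product is then
  inner x y + i * inner x (J y) (up to convention); its real part is the real
  inner product, so orthogonality, orthogonal projections onto complex
  subspaces, weak convergence, adjoints of complex-linear operators and kernels
  are the same whether computed with the real or the complex inner product.
  Unbounded operators are pairs (D, A) of a domain D and a function A whose
  values outside D are irrelevant.
\<close>

definition complex_structure :: "('a::real_inner \<Rightarrow> 'a) \<Rightarrow> bool" where
  "complex_structure J \<longleftrightarrow> linear J \<and> (\<forall>x. J (J x) = - x)
      \<and> (\<forall>x y. inner (J x) (J y) = inner x y)"

definition complex_subspace :: "('a::real_inner \<Rightarrow> 'a) \<Rightarrow> 'a set \<Rightarrow> bool" where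
  "complex_subspace J S \<longleftrightarrow> subspace S \<and> (\<forall>x\<in>S. J x \<in> S)"

definition finite_dimensional :: "'a::real_vector set \<Rightarrow> bool" where
  "finite_dimensional S \<longleftrightarrow> (\<exists>B. finite B \<and> B \<subseteq> S \<and> span B = span S)"

definition separable_space :: "'a::metric_space itself \<Rightarrow> bool" where
  "separable_space _ \<longleftrightarrow> (\<exists>C::'a set. countable C \<and> closure C = UNIV)"

definition complex_linear_op ::
    "('a::real_inner \<Rightarrow> 'a) \<Rightarrow> 'a set \<Rightarrow> ('a \<Rightarrow> 'a) \<Rightarrow> bool" where
  "complex_linear_op J D A \<longleftrightarrow> complex_subspace J D
     \<and> (\<forall>x\<in>D. \<forall>y\<in>D. A (x + y) = A x + A y)
     \<and> (\<forall>x\<in>D. \<forall>c. A (c *\<^sub>R x) = c *\<^sub>R A x)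
     \<and> (\<forall>x\<in>D. A (J x) = J (A x))"

definition adjoint_domain :: "'a set \<Rightarrow> ('a::real_inner \<Rightarrow> 'a) \<Rightarrow> 'a set" where
  "adjoint_domain D A = {y. \<exists>z. \<forall>x\<in>D. inner (A x) y = inner x z}"

definition selfadjoint_op ::
    "('a::real_inner \<Rightarrow> 'a) \<Rightarrow> 'a set \<Rightarrow> ('a \<Rightarrow> 'a) \<Rightarrow> bool" where
  "selfadjoint_op J D A \<longleftrightarrow> complex_linear_op J D A \<and> closure D = UNIV
     \<and> adjoint_domain D A = D
     \<and> (\<forall>x\<in>D. \<forall>y\<in>D. inner (A x) y = inner x (A y))"

definition nonneg_op :: "'a set \<Rightarrow> ('a::real_inner \<Rightarrow> 'a) \<Rightarrow> bool" where
  "nonneg_op D A \<longleftrightarrow> (\<forall>x\<in>D. inner (A x) x \<ge> 0)"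

definition is_sqrt_op ::
    "('a::real_inner \<Rightarrow> 'a) \<Rightarrow> 'a set \<Rightarrow> ('a \<Rightarrow> 'a) \<Rightarrow> 'a set \<Rightarrow> ('a \<Rightarrow> 'a) \<Rightarrow> bool" where
  "is_sqrt_op J D A DS S \<longleftrightarrow> selfadjoint_op J DS S \<and> nonneg_op DS S
     \<and> D = {x\<in>DS. S x \<in> DS} \<and> (\<forall>x\<in>D. S (S x) = A x)"

definition galerkin_seq :: "('a::real_inner \<Rightarrow> 'a) \<Rightarrow> (nat \<Rightarrow> 'a set) \<Rightarrow> bool" where
  "galerkin_seq J L \<longleftrightarrow> (\<forall>n. complex_subspace J (L n) \<and> finite_dimensional (L n))"

definition op_regular ::
    "'a set \<Rightarrow> ('a::real_normed_vector \<Rightarrow> 'a) \<Rightarrow> (nat \<Rightarrow> 'a set) \<Rightarrow> bool" where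
  "op_regular D T L \<longleftrightarrow> (\<forall>n. L n \<subseteq> D) \<and>
     (\<forall>f\<in>D. \<exists>fs. (\<forall>n. fs n \<in> L n) \<and>
        (\<lambda>n. norm (fs n - f) + norm (T (fs n) - T f)) \<longlonglongrightarrow> 0)"

definition orth_proj :: "'a set \<Rightarrow> 'a::real_inner \<Rightarrow> 'a" where
  "orth_proj S x = (THE y. y \<in> S \<and> (\<forall>z\<in>S. inner (x - y) z = 0))"

definition galerkin_op :: "(nat \<Rightarrow> 'a set) \<Rightarrow> ('a::real_inner \<Rightarrow> 'a) \<Rightarrow> nat \<Rightarrow> 'a \<Rightarrow> 'a" where
  "galerkin_op L A n x = orth_proj (L n) (A x)"

definition galerkin_form_op ::
    "(nat \<Rightarrow> 'a set) \<Rightarrow> ('a::real_inner \<Rightarrow> 'a) \<Rightarrow> nat \<Rightarrow> 'a \<Rightarrow> 'a" where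
  "galerkin_form_op L S n x =
     (THE w. w \<in> L n \<and> (\<forall>y\<in>L n. inner y w = inner (S y) (S x)))"

definition weakly_conv :: "(nat \<Rightarrow> 'a::real_inner) \<Rightarrow> 'a \<Rightarrow> bool" where
  "weakly_conv xs x \<longleftrightarrow> (\<forall>y. (\<lambda>k. inner (xs k) y) \<longlonglongrightarrow> inner x y)"

end

theory Submission
  imports Defs
begin


lemma riesz_fin:
  fixes B :: "'a::real_inner set"
  assumes "finite B"
  shows "\<And>\<phi>. (\<forall>x\<in>span B. \<forall>y\<in>span B. \<phi>(x+y) = \<phi> x + \<phi> y) \<Longrightarrow>
     (\<forall>x\<in>span B. \<forall>c. \<phi>(c *\<^sub>R x) = c * \<phi> x) \<Longrightarrow>
     \<exists>w\<in>span B. \<forall>z\<in>span B. inner z w = \<phi> z"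
  using assms
proof (induction B)
  case empty
  have "\<phi> 0 = 0" using empty(2) by (metis mult_zero_left scale_zero_left span_zero)
  then show ?case by (auto intro!: bexI[of _ 0] simp: span_zero)
next
  case (insert a B)
  have sub: "span B \<subseteq> span (insert a B)" by (simp add: span_mono subset_insertI)
  obtain w where w: "w \<in> span B" "\<forall>z\<in>span B. inner z w = \<phi> z"
    using insert.IH[of \<phi>] insert.prems sub by (meson subsetD)
  obtain q where q: "q \<in> span B" "\<forall>z\<in>span B. inner z q = inner z a"
    using insert.IH[of "\<lambda>z. inner z a"] by (auto simp: inner_add_left)
  define a' where "a' = a - q"
  have orth: "\<forall>z\<in>span B. inner z a' = 0" using q by (simp add: a'_def inner_diff_right)
  show ?case
  proof (cases "a' = 0")
    case True
    then have "a \<in> span B" using q a'_def by simp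
    then have "span (insert a B) = span B" by (rule span_redundant)
    then show ?thesis using w by auto
  next
    case False
    have aa: "inner a' a' \<noteq> 0" using False by simp
    have a'in: "a' \<in> span (insert a B)" unfolding a'_def
      using q(1) sub by (meson insertI1 span_base span_diff subsetD)
    define t where "t = \<phi> a' / inner a' a'"
    define w' where "w' = w + t *\<^sub>R a'"
    have "w' \<in> span (insert a B)" unfolding w'_def
      using w(1) sub a'in by (meson span_add span_scale subsetD)
    moreover have "inner z w' = \<phi> z" if z: "z \<in> span (insert a B)" for z
    proof -
      obtain c where c: "z - c *\<^sub>R a \<in> span B" using z span_breakdown_eq by blast
      define b' where "b' = (z - c *\<^sub>R a) + c *\<^sub>R q"
      have b': "b' \<in> span B" unfolding b'_def using c q(1) by (simp add: span_add span_scale)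
      have zeq: "z = b' + c *\<^sub>R a'" unfolding b'_def a'_def by (simp add: algebra_simps)
      have "inner z w' = inner b' w + t * inner b' a' + c * inner a' w + c * t * inner a' a'"
        unfolding zeq w'_def by (simp add: inner_add_left inner_add_right algebra_simps)
      also have "\<dots> = \<phi> b' + c * \<phi> a'"
      proof -
        have "inner b' a' = 0" "inner a' w = 0" using orth b' w(1) by (auto simp: inner_commute)
        then show ?thesis using w(2) b' aa by (simp add: t_def)
      qed
      also have "\<dots> = \<phi> z"
        using insert.prems b' a'in sub zeq by (metis span_scale subsetD)
      finally show ?thesis .
    qed
    ultimately show ?thesis by blast
  qed
qed

lemma riesz_sub:
  fixes S :: "'a::real_inner set"
  assumes "subspace S" "finite_dimensional S"
    and "\<forall>x\<in>S. \<forall>y\<in>S. \<phi>(x+y) = \<phi> x + \<phi> y" "\<forall>x\<in>S. \<forall>c. \<phi>(c *\<^sub>R x) = c * \<phi> x"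
  shows "\<exists>!w. w \<in> S \<and> (\<forall>z\<in>S. inner z w = \<phi> z)"
proof -
  obtain B where B: "finite B" "B \<subseteq> S" "span B = span S" using assms(2) finite_dimensional_def by blast
  have sp: "span B = S" using B assms(1) by (simp add: span_eq_iff)
  obtain w where w: "w \<in> S" "\<forall>z\<in>S. inner z w = \<phi> z"
    using riesz_fin[OF B(1), of \<phi>] assms(3,4) sp by auto
  moreover have "v = w" if v: "v \<in> S" "\<forall>z\<in>S. inner z v = \<phi> z" for v
  proof -
    have d: "v - w \<in> S" using v(1) w(1) assms(1) by (simp add: subspace_diff)
    have "inner (v - w) v - inner (v - w) w = 0" using v(2) w(2) d by simp
    then have "inner (v - w) (v - w) = 0" by (simp add: inner_diff_right)
    then show ?thesis by simp
  qed
  ultimately show ?thesis by blast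
qed

lemma orth_proj_prop:
  fixes S :: "'a::real_inner set"
  assumes "subspace S" "finite_dimensional S"
  shows "orth_proj S v \<in> S \<and> (\<forall>z\<in>S. inner z (orth_proj S v) = inner z v)"
proof -
  have e: "\<exists>!w. w \<in> S \<and> (\<forall>z\<in>S. inner z w = inner z v)"
    by (rule riesz_sub[OF assms]) (auto simp: inner_add_left)
  have eq: "(\<lambda>y. y \<in> S \<and> (\<forall>z\<in>S. inner (v - y) z = 0)) = (\<lambda>w. w \<in> S \<and> (\<forall>z\<in>S. inner z w = inner z v))"
    by (rule ext) (metis (no_types, lifting) inner_commute inner_diff_left right_minus_eq)
  show ?thesis unfolding orth_proj_def eq using theI'[OF e] by blast
qed

lemma form_op_prop:
  fixes T :: "'a::real_inner \<Rightarrow> 'a"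
  assumes "subspace (L n)" "finite_dimensional (L n)"
    and "\<forall>x\<in>L n. \<forall>y\<in>L n. T(x+y) = T x + T y" "\<forall>x\<in>L n. \<forall>c. T(c *\<^sub>R x) = c *\<^sub>R T x"
  shows "galerkin_form_op L T n v \<in> L n \<and> (\<forall>y\<in>L n. inner y (galerkin_form_op L T n v) = inner (T y) (T v))"
proof -
  have e: "\<exists>!w. w \<in> L n \<and> (\<forall>y\<in>L n. inner y w = inner (T y) (T v))"
    by (rule riesz_sub[OF assms(1,2)]) (use assms(3,4) in \<open>auto simp: inner_add_left\<close>)
  show ?thesis unfolding galerkin_form_op_def using theI'[OF e] by blast
qed

lemma sa_eig:
  assumes sa: "selfadjoint_op J D A" and h: "\<forall>f\<in>D. inner (A f) x = inner f (lam *\<^sub>R x)"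
  shows "x \<in> D \<and> A x = lam *\<^sub>R x"
proof -
  have xD: "x \<in> D" using sa h unfolding selfadjoint_op_def adjoint_domain_def by blast
  define v where "v = A x - lam *\<^sub>R x"
  have "D \<subseteq> {y. inner y v = 0}"
  proof
    fix y assume y: "y \<in> D"
    have "inner (A y) x = inner y (A x)" using sa y xD unfolding selfadjoint_op_def by blast
    then show "y \<in> {y. inner y v = 0}" using h y by (simp add: v_def inner_diff_right)
  qed
  moreover have "closed {y. inner y v = 0}"
    by (intro closed_Collect_eq continuous_intros)
  ultimately have "closure D \<subseteq> {y. inner y v = 0}" by (rule closure_minimal)
  then have "inner v v = 0" using sa unfolding selfadjoint_op_def by blast
  then show ?thesis using xD by (simp add: v_def)
qed

lemma bound_null:
  fixes u v :: "nat \<Rightarrow> 'a::real_inner"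
  assumes "(\<lambda>k. norm (u k)) \<longlonglongrightarrow> 0" "\<forall>k. norm (v k) \<le> M"
  shows "(\<lambda>k. inner (u k) (v k)) \<longlonglongrightarrow> 0"
proof (rule Lim_null_comparison)
  show "\<forall>\<^sub>F k in sequentially. norm (inner (u k) (v k)) \<le> norm (u k) * M"
  proof (intro always_eventually allI)
    fix k
    have "norm (inner (u k) (v k)) \<le> norm (u k) * norm (v k)" using Cauchy_Schwarz_ineq2 by simp
    also have "\<dots> \<le> norm (u k) * M" using assms(2) by (simp add: mult_left_mono)
    finally show "norm (inner (u k) (v k)) \<le> norm (u k) * M" .
  qed
  show "(\<lambda>k. norm (u k) * M) \<longlonglongrightarrow> 0" using tendsto_mult_left_zero[OF assms(1)] by simp
qed

lemma reg_approx:
  assumes reg: "op_regular D T L" and f: "f \<in> D" and nk: "filterlim nk at_top sequentially"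
  obtains g where "\<forall>k. g k \<in> L (nk k)" "(\<lambda>k. norm (g k - f)) \<longlonglongrightarrow> 0" "g \<longlonglongrightarrow> f"
    "(\<lambda>k. norm (T (g k) - T f)) \<longlonglongrightarrow> 0"
proof -
  obtain fs where fs: "\<forall>n. fs n \<in> L n"
    and lim: "(\<lambda>n. norm (fs n - f) + norm (T (fs n) - T f)) \<longlonglongrightarrow> 0"
    using reg f unfolding op_regular_def by blast
  have l1: "(\<lambda>n. norm (fs n - f)) \<longlonglongrightarrow> 0"
    by (rule tendsto_sandwich[OF _ _ tendsto_const lim]) auto
  have l2: "(\<lambda>n. norm (T (fs n) - T f)) \<longlonglongrightarrow> 0"
    by (rule tendsto_sandwich[OF _ _ tendsto_const lim]) auto
  have g1: "(\<lambda>k. norm (fs (nk k) - f)) \<longlonglongrightarrow> 0" using filterlim_compose[OF l1 nk] by simp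
  have g2: "(\<lambda>k. norm (T (fs (nk k)) - T f)) \<longlonglongrightarrow> 0" using filterlim_compose[OF l2 nk] by simp
  have "(\<lambda>k. fs (nk k)) \<longlonglongrightarrow> f"
    using g1 by (simp add: tendsto_norm_zero_iff LIM_zero_iff)
  then show ?thesis using that[of "\<lambda>k. fs (nk k)"] fs g1 g2 by blast
qed

lemma weak_inner:
  assumes "weakly_conv xs x" "\<forall>k. norm (xs k) = 1" "g \<longlonglongrightarrow> f" "(\<lambda>k. norm (g k - f)) \<longlonglongrightarrow> 0"
  shows "(\<lambda>k. inner (g k) (xs k)) \<longlonglongrightarrow> inner f x"
proof -
  have a: "(\<lambda>k. inner (g k - f) (xs k)) \<longlonglongrightarrow> 0"
    by (rule bound_null[OF assms(4), of _ 1]) (use assms(2) in simp)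
  have b: "(\<lambda>k. inner f (xs k)) \<longlonglongrightarrow> inner f x"
    using assms(1) unfolding weakly_conv_def by (simp add: inner_commute)
  have "(\<lambda>k. inner (g k - f) (xs k) + inner f (xs k)) \<longlonglongrightarrow> 0 + inner f x"
    by (rule tendsto_add[OF a b])
  then show ?thesis by (simp add: inner_diff_left)
qed

lemma case1:
  fixes xs :: "nat \<Rightarrow> 'a::real_inner"
  assumes sa: "selfadjoint_op J D A" and gal: "galerkin_seq J L"
    and nk: "filterlim nk at_top sequentially"
    and xs_in: "\<forall>k. xs k \<in> L (nk k)" and xs_norm: "\<forall>k. norm (xs k) = 1"
    and weak: "weakly_conv xs x" and reg: "op_regular D A L"
    and conv: "(\<lambda>k. galerkin_op L A (nk k) (xs k) - lam *\<^sub>R xs k) \<longlonglongrightarrow> 0"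
  shows "x \<in> D \<and> A x = lam *\<^sub>R x"
proof -
  have weak': "\<forall>y. (\<lambda>k. inner y (xs k)) \<longlonglongrightarrow> inner y x"
    using weak unfolding weakly_conv_def by (simp add: inner_commute)
  have LD: "\<And>n. L n \<subseteq> D" using reg op_regular_def by blast
  have sub: "\<And>n. subspace (L n)" "\<And>n. finite_dimensional (L n)"
    using gal unfolding galerkin_seq_def complex_subspace_def by auto
  have symm: "\<forall>x\<in>D. \<forall>y\<in>D. inner (A x) y = inner x (A y)" using sa selfadjoint_op_def by blast
  have "\<forall>f\<in>D. inner (A f) x = inner f (lam *\<^sub>R x)"
  proof
    fix f assume f: "f \<in> D"
    obtain g where g: "\<forall>k. g k \<in> L (nk k)" "(\<lambda>k. norm (g k - f)) \<longlonglongrightarrow> 0" "g \<longlonglongrightarrow> f"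
      "(\<lambda>k. norm (A (g k) - A f)) \<longlonglongrightarrow> 0"
      using reg_approx[OF reg f nk] by blast
    define e where "e k = galerkin_op L A (nk k) (xs k) - lam *\<^sub>R xs k" for k
    have eq: "inner (A (g k)) (xs k) = inner (g k) (e k) + lam * inner (g k) (xs k)" for k
    proof -
      have "inner (A (g k)) (xs k) = inner (g k) (A (xs k))"
        using symm g(1) xs_in LD by blast
      also have "\<dots> = inner (g k) (galerkin_op L A (nk k) (xs k))"
        using orth_proj_prop[OF sub(1,2), of "nk k" "A (xs k)"] g(1)
        unfolding galerkin_op_def by simp
      finally show ?thesis by (simp add: e_def inner_diff_right)
    qed
    have l1: "(\<lambda>k. inner (g k) (e k)) \<longlonglongrightarrow> inner f 0"
      using tendsto_inner[OF g(3) conv[folded e_def]] .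
    have l2: "(\<lambda>k. inner (g k) (xs k)) \<longlonglongrightarrow> inner f x"
      by (rule weak_inner[OF weak xs_norm g(3,2)])
    have L1: "(\<lambda>k. inner (A (g k)) (xs k)) \<longlonglongrightarrow> 0 + lam * inner f x"
      unfolding eq using tendsto_add[OF l1 tendsto_mult[OF tendsto_const l2]] by simp
    have a: "(\<lambda>k. inner (A (g k) - A f) (xs k)) \<longlonglongrightarrow> 0"
      by (rule bound_null[OF g(4), of _ 1]) (use xs_norm in simp)
    have b: "(\<lambda>k. inner (A f) (xs k)) \<longlonglongrightarrow> inner (A f) x"
      using weak' by blast
    have L2: "(\<lambda>k. inner (A (g k)) (xs k)) \<longlonglongrightarrow> 0 + inner (A f) x"
      using tendsto_add[OF a b] by (simp add: inner_diff_left)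
    show "inner (A f) x = inner f (lam *\<^sub>R x)"
      using LIMSEQ_unique[OF L1 L2] by simp
  qed
  then show ?thesis by (rule sa_eig[OF sa])
qed

lemma case2:
  fixes xs :: "nat \<Rightarrow> 'a::real_inner"
  assumes sa: "selfadjoint_op J D A" and gal: "galerkin_seq J L"
    and nk: "filterlim nk at_top sequentially"
    and xs_in: "\<forall>k. xs k \<in> L (nk k)" and xs_norm: "\<forall>k. norm (xs k) = 1"
    and weak: "weakly_conv xs x" and sq: "is_sqrt_op J D A DS S" and reg: "op_regular DS S L"
    and conv: "(\<lambda>k. galerkin_form_op L S (nk k) (xs k) - lam *\<^sub>R xs k) \<longlonglongrightarrow> 0"
  shows "x \<in> D \<and> A x = lam *\<^sub>R x"
proof -
  have weak': "\<forall>y. (\<lambda>k. inner y (xs k)) \<longlonglongrightarrow> inner y x"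
    using weak unfolding weakly_conv_def by (simp add: inner_commute)
  have LD: "\<And>n. L n \<subseteq> DS" using reg op_regular_def by blast
  have sub: "\<And>n. subspace (L n)" "\<And>n. finite_dimensional (L n)"
    using gal unfolding galerkin_seq_def complex_subspace_def by auto
  have saS: "selfadjoint_op J DS S" and Deq: "D = {x\<in>DS. S x \<in> DS}"
    and SS: "\<forall>x\<in>D. S (S x) = A x" using sq is_sqrt_op_def by blast+
  have symm: "\<forall>x\<in>DS. \<forall>y\<in>DS. inner (S x) y = inner x (S y)" using saS selfadjoint_op_def by blast
  have lin: "\<forall>x\<in>DS. \<forall>y\<in>DS. S (x + y) = S x + S y" "\<forall>x\<in>DS. \<forall>c. S (c *\<^sub>R x) = c *\<^sub>R S x"
    using saS unfolding selfadjoint_op_def complex_linear_op_def by blast+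
  define w where "w k = galerkin_form_op L S (nk k) (xs k)" for k
  define e where "e k = w k - lam *\<^sub>R xs k" for k
  have wp: "\<forall>y\<in>L (nk k). inner y (w k) = inner (S y) (S (xs k))" for k
    using form_op_prop[where L=L and n="nk k" and T=S and v="xs k", OF sub(1,2)] lin LD unfolding w_def by (meson subsetD)
  obtain K where K: "K > 0" "\<And>k. norm (e k) \<le> K"
    using conv[folded w_def, folded e_def] by (metis BseqE convergent_imp_Bseq convergentI)
  define M where "M = K + \<bar>lam\<bar> + 1"
  have Sb: "norm (S (xs k)) \<le> M" for k
  proof -
    have "(norm (S (xs k)))^2 = inner (xs k) (w k)"
      using wp[of k] xs_in by (simp add: power2_norm_eq_inner)
    also have "\<dots> \<le> norm (xs k) * norm (w k)" by (rule norm_cauchy_schwarz)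
    also have "\<dots> = norm (e k + lam *\<^sub>R xs k)" using xs_norm by (simp add: e_def)
    also have "\<dots> \<le> norm (e k) + \<bar>lam\<bar>" using xs_norm by (metis norm_scaleR norm_triangle_ineq mult.right_neutral add_left_mono order_trans)
    also have "\<dots> \<le> K + \<bar>lam\<bar>" using K by simp
    finally have "(norm (S (xs k)))^2 \<le> M - 1" by (simp add: M_def)
    moreover have "M \<ge> 1" using K by (simp add: M_def)
    ultimately show ?thesis
      by (smt (verit) power2_eq_square mult_le_cancel_left1 norm_ge_zero)
  qed
  have "\<forall>f\<in>D. inner (A f) x = inner f (lam *\<^sub>R x)"
  proof
    fix f assume f: "f \<in> D"
    have fDS: "f \<in> DS" "S f \<in> DS" using f Deq by auto
    obtain g where g: "\<forall>k. g k \<in> L (nk k)" "(\<lambda>k. norm (g k - f)) \<longlonglongrightarrow> 0" "g \<longlonglongrightarrow> f"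
      "(\<lambda>k. norm (S (g k) - S f)) \<longlonglongrightarrow> 0"
      using reg_approx[OF reg fDS(1) nk] by blast
    have eq: "inner (S (g k)) (S (xs k)) = inner (g k) (e k) + lam * inner (g k) (xs k)" for k
      using wp[of k] g(1) by (simp add: e_def inner_diff_right)
    have l1: "(\<lambda>k. inner (g k) (e k)) \<longlonglongrightarrow> inner f 0"
      using tendsto_inner[OF g(3) conv[folded w_def, folded e_def]] .
    have l2: "(\<lambda>k. inner (g k) (xs k)) \<longlonglongrightarrow> inner f x"
      by (rule weak_inner[OF weak xs_norm g(3,2)])
    have L1: "(\<lambda>k. inner (S (g k)) (S (xs k))) \<longlonglongrightarrow> 0 + lam * inner f x"
      unfolding eq using tendsto_add[OF l1 tendsto_mult[OF tendsto_const l2]] by simp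
    have a: "(\<lambda>k. inner (S (g k) - S f) (S (xs k))) \<longlonglongrightarrow> 0"
      by (rule bound_null[OF g(4), of _ M]) (use Sb in simp)
    have b0: "inner (S f) (S (xs k)) = inner (A f) (xs k)" for k
      using symm fDS xs_in LD SS f by (metis subsetD)
    have b: "(\<lambda>k. inner (S f) (S (xs k))) \<longlonglongrightarrow> inner (A f) x"
      using weak' unfolding b0 by blast
    have L2: "(\<lambda>k. inner (S (g k)) (S (xs k))) \<longlonglongrightarrow> 0 + inner (A f) x"
      using tendsto_add[OF a b] by (simp add: inner_diff_left)
    show "inner (A f) x = inner f (lam *\<^sub>R x)"
      using LIMSEQ_unique[OF L1 L2] by simp
  qed
  then show ?thesis by (rule sa_eig[OF sa])
qed



theorem lemma3p2:
  fixes J :: "'a::{real_inner, complete_space} \<Rightarrow> 'a"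
    and D :: "'a set" and A :: "'a \<Rightarrow> 'a"
    and L :: "nat \<Rightarrow> 'a set"
    and lam :: real and nk :: "nat \<Rightarrow> nat" and xs :: "nat \<Rightarrow> 'a" and x :: 'a
  assumes cs: "complex_structure J"
    and sep: "separable_space TYPE('a)"
    and infdim: "\<not> finite_dimensional (UNIV :: 'a set)"
    and sa: "selfadjoint_op J D A"
    and gal: "galerkin_seq J L"
    and nk: "filterlim nk at_top sequentially"
    and xs_in: "\<forall>k. xs k \<in> L (nk k)"
    and xs_norm: "\<forall>k. norm (xs k) = 1"
    and weak: "weakly_conv xs x"
  shows "(op_regular D A L \<longrightarrow>
            (\<lambda>k. galerkin_op L A (nk k) (xs k) - lam *\<^sub>R xs k) \<longlonglongrightarrow> 0 \<longrightarrow>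
            x \<in> D \<and> A x = lam *\<^sub>R x)
       \<and> (\<forall>DS S. nonneg_op D A \<and> is_sqrt_op J D A DS S \<and> op_regular DS S L \<longrightarrow>
            (\<lambda>k. galerkin_form_op L S (nk k) (xs k) - lam *\<^sub>R xs k) \<longlonglongrightarrow> 0 \<longrightarrow>
            x \<in> D \<and> A x = lam *\<^sub>R x)"
    using case1[OF sa gal nk xs_in xs_norm weak] case2[OF sa gal nk xs_in xs_norm weak] by blast

end
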